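(* Let $q\ge1$, $u,v\in\{1,\dots,q\}$, $p_1,p_2\in[0,1]$, and let $X_1\sim\mathrm{Binomial}(u,p_1)$ and $X_2\sim\mathrm{Binomial}(v,p_2)$ be independent. Let $p^*=\min\{\max\{p_1,1-p_1\},\max\{p_2,1-p_2\}\}$. Then $\Pr[X_1\neq X_2]\ge1-\sqrt{p^*}$.
   Context: $\mathrm{Binomial}(n,p)$ is the sum of $n$ i.i.d. $\{0,1\}$-valued random variables each with mean $p$. *)

theory Defs
  imports "HOL-Probability.Probability"
begin

end

theory Submission
  imports Defs
begin

lemma binom_rec:
  assumes "p \<in> {0..1}"
  shows "pmf (binomial_pmf (Suc n) p) (Suc j) = p * pmf (binomial_pmf n p) j + (1 - p) * pmf (binomial_pmf n p) (Suc j)"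
proof (cases "j < n")
  case True
  then obtain r where r: "n - j = Suc r" "n - Suc j = r" by (metis Suc_diff_Suc)
  show ?thesis using assms r
    by (simp add: binomial_Suc_Suc algebra_simps)
next
  case False
  then show ?thesis using assms
    by (simp add: binomial_Suc_Suc algebra_simps binomial_eq_0)
qed

lemma binom_mode:
  assumes "p \<in> {0..1}" "n \<ge> 1"
  shows "pmf (binomial_pmf n p) k \<le> max p (1 - p)"
proof -
  obtain m where n: "n = Suc m" using assms(2) by (cases n) auto
  show ?thesis
  proof (cases k)
    case 0
    have "(1 - p) ^ Suc m \<le> (1 - p)" using assms(1)
      by (simp add: power_le_one mult_left_le)
    then show ?thesis using 0 n assms(1) by simp
  next
    case (Suc j)
    let ?B = "binomial_pmf m p"
    have s: "pmf ?B j + pmf ?B (Suc j) \<le> 1"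
    proof -
      have "measure_pmf.prob ?B {j, Suc j} = pmf ?B j + pmf ?B (Suc j)"
        by (subst measure_measure_pmf_finite) auto
      moreover have "measure_pmf.prob ?B {j, Suc j} \<le> 1" by simp
      ultimately show ?thesis by simp
    qed
    have "pmf (binomial_pmf n p) k = p * pmf ?B j + (1 - p) * pmf ?B (Suc j)"
      using binom_rec[OF assms(1)] n Suc by simp
    also have "\<dots> \<le> max p (1 - p) * pmf ?B j + max p (1 - p) * pmf ?B (Suc j)"
      by (intro add_mono mult_right_mono) auto
    also have "\<dots> = max p (1 - p) * (pmf ?B j + pmf ?B (Suc j))" by (simp add: algebra_simps)
    also have "\<dots> \<le> max p (1 - p)" using s assms(1)
      by (intro mult_left_le) auto
    finally show ?thesis .
  qed
qed

lemma pair_eq_bound: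
  fixes A B :: "'a pmf"
  assumes "\<And>k. pmf B k \<le> m"
  shows "measure_pmf.prob (pair_pmf A B) {(x, y). x = y} \<le> m"
proof -
  have m0: "0 \<le> m" using assms[of undefined] pmf_nonneg[of B undefined] by linarith
  have "emeasure (measure_pmf (pair_pmf A B)) {(x, y). x = y} = (\<integral>\<^sup>+z. indicator {(x, y). x = y} z \<partial>pair_pmf A B)"
    by simp
  also have "\<dots> = (\<integral>\<^sup>+a. \<integral>\<^sup>+b. indicator {(x, y). x = y} (a, b) \<partial>B \<partial>A)"
    by (rule nn_integral_pair_pmf')
  also have "\<dots> = (\<integral>\<^sup>+a. emeasure (measure_pmf B) {a} \<partial>A)"
  proof (intro nn_integral_cong)
    fix a :: 'a
    have "(\<lambda>b. indicator {(x, y). x = y} (a, b) :: ennreal) = indicator {a}"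
      by (auto simp: indicator_def)
    then show "(\<integral>\<^sup>+b. indicator {(x, y). x = y} (a, b) \<partial>B) = emeasure (measure_pmf B) {a}"
      by simp
  qed
  also have "\<dots> \<le> (\<integral>\<^sup>+a. ennreal m \<partial>A)"
    by (intro nn_integral_mono) (simp add: emeasure_pmf_single assms ennreal_leI)
  also have "\<dots> = ennreal m" by simp
  finally have "emeasure (measure_pmf (pair_pmf A B)) {(x, y). x = y} \<le> ennreal m" .
  then show ?thesis using m0
    by (simp add: measure_pmf.emeasure_eq_measure)
qed

theorem lemma15:
  fixes q u v :: nat and p1 p2 :: real
  assumes "q \<ge> 1" and "u \<in> {1..q}" and "v \<in> {1..q}"
    and "p1 \<in> {0..1}" and "p2 \<in> {0..1}"
  shows "measure_pmf.prob (pair_pmf (binomial_pmf u p1) (binomial_pmf v p2)) {(x1, x2). x1 \<noteq> x2}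
           \<ge> 1 - sqrt (min (max p1 (1 - p1)) (max p2 (1 - p2)))"
proof -
  let ?P = "pair_pmf (binomial_pmf u p1) (binomial_pmf v p2)"
  let ?s = "min (max p1 (1 - p1)) (max p2 (1 - p2))"
  have e2: "measure_pmf.prob ?P {(x, y). x = y} \<le> max p2 (1 - p2)"
    by (rule pair_eq_bound, rule binom_mode) (use assms in auto)
  have "measure_pmf.prob ?P {(x, y). x = y}
        = measure_pmf.prob (pair_pmf (binomial_pmf v p2) (binomial_pmf u p1)) {(x, y). x = y}"
    by (subst pair_commute_pmf) (auto intro!: arg_cong[where f="measure_pmf.prob _"])
  also have "\<dots> \<le> max p1 (1 - p1)"
    by (rule pair_eq_bound, rule binom_mode) (use assms in auto)
  finally have e1: "measure_pmf.prob ?P {(x, y). x = y} \<le> max p1 (1 - p1)" .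
  have es: "measure_pmf.prob ?P {(x, y). x = y} \<le> ?s" using e1 e2 by simp
  have s01: "0 \<le> ?s" "?s \<le> 1" using assms by auto
  have "?s \<le> sqrt ?s"
    using s01 by (metis real_sqrt_le_iff real_sqrt_pow2 power2_eq_square mult_left_le real_sqrt_ge_zero real_sqrt_le_1_iff)
  have c: "{(x1, x2). x1 \<noteq> x2} = UNIV - {(x :: nat, y). x = y}" by auto
  have "measure_pmf.prob ?P {(x1, x2). x1 \<noteq> x2} = 1 - measure_pmf.prob ?P {(x, y). x = y}"
    unfolding c using measure_pmf.prob_compl[of "{(x :: nat, y). x = y}" ?P] by simp
  then show ?thesis using es \<open>?s \<le> sqrt ?s\<close> by linarith
qed

end
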